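(* For $n=2,3,\dots$ let $\Omega_n=\{1,\dots,n\}$, $\mathcal P_n=\mathcal P(\Omega_n)$ and $g_n$ the Fisher co-metric on $\mathcal P_n$. Let $\{h_n\}_{n\ge2}$ be given, where $h_n$ is a contravariant tensor field of degree 2 on $\mathcal P_n$ mapping each $p\in\mathcal P_n$ continuously to a non-degenerate symmetric bilinear form $h_{n,p}:T_p^*(\mathcal P_n)^2\to\mathbb R$. The following are equivalent: (i) there is $c\in\mathbb R\setminus\{0\}$ with $h_n=c\,g_n$ for all $n$; (ii) for all $m\le n$ and every pair of a Markov embedding $\Phi:\mathcal P_m\to\mathcal P_n$ and a Markov co-embedding $\Psi:\mathcal P_n\to\mathcal P_m$ with $\Psi\circ\Phi=\mathrm{id}_{\mathcal P_m}$, $$h_{m,p}(\alpha_p,\Phi^*_p\beta_{\Phi(p)})=h_{n,\Phi(p)}(\Psi^*_{\Phi(p)}\alpha_p,\beta_{\Phi(p)})\quad\forall p\in\mathcal P_m,\ \alpha_p\in T^*_p(\mathcal P_m),\ \beta_{\Phi(p)}\in T^*_{\Phi(p)}(\mathcal P_n).$$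
   Context: $\mathcal P(\Omega)$ is the manifold of strictly positive probability distributions on a finite set $\Omega$. The Fisher co-metric on $T^*_p(\mathcal P(\Omega))$ is $g_p((d\langle A\rangle)_p,(d\langle B\rangle)_p)=\mathrm{Cov}_p(A,B)$, where $\langle A\rangle(p)=\sum_\omega p(\omega)A(\omega)$. A Markov map $\mathcal P_m\to\mathcal P_n$ is a map $p\mapsto\sum_xW(\cdot|x)p(x)$ for a channel $W$ with $\forall y\,\exists x\,W(y|x)>0$. A Markov map $\Phi$ is a Markov embedding if some Markov map $\Psi$ satisfies $\Psi\circ\Phi=\mathrm{id}$; such $\Psi$ is a Markov co-embedding. $\Phi^*_p$, $\Psi^*_q$ denote transposes of the differentials $(d\Phi)_p$, $(d\Psi)_q$. *)

theory Defs
  imports "HOL-Analysis.Analysis"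
begin

text \<open>Omega_n = {1..n} is represented by the index set {..<n} = {0,...,n-1}.
  Points, tangent_vec vectors and random variables are functions nat => real;
  points and tangent_vec vectors are required to vanish outside {..<n}.\<close>

definition prob_simplex :: "nat \<Rightarrow> (nat \<Rightarrow> real) set" where
  "prob_simplex n = {p. (\<forall>i<n. 0 < p i) \<and> (\<forall>i\<ge>n. p i = 0) \<and> (\<Sum>i<n. p i) = 1}"

definition tangent_vec :: "nat \<Rightarrow> (nat \<Rightarrow> real) \<Rightarrow> bool" where
  "tangent_vec n v \<longleftrightarrow> (\<forall>i\<ge>n. v i = 0) \<and> (\<Sum>i<n. v i) = 0"

text \<open>The covector (d<A>)_p applied to a tangent_vec vector v (independent of p).\<close>
definition dexp :: "nat \<Rightarrow> (nat \<Rightarrow> real) \<Rightarrow> (nat \<Rightarrow> real) \<Rightarrow> real" where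
  "dexp n A v = (\<Sum>i<n. A i * v i)"

definition cov_eq :: "nat \<Rightarrow> (nat \<Rightarrow> real) \<Rightarrow> (nat \<Rightarrow> real) \<Rightarrow> bool" where
  "cov_eq n A B \<longleftrightarrow> (\<forall>v. tangent_vec n v \<longrightarrow> dexp n A v = dexp n B v)"

text \<open>Expectation and Fisher co-metric g_p(d<A>, d<B>) = Cov_p(A,B).\<close>
definition expect :: "nat \<Rightarrow> (nat \<Rightarrow> real) \<Rightarrow> (nat \<Rightarrow> real) \<Rightarrow> real" where
  "expect n p A = (\<Sum>i<n. p i * A i)"

definition fisher :: "nat \<Rightarrow> (nat \<Rightarrow> real) \<Rightarrow> (nat \<Rightarrow> real) \<Rightarrow> (nat \<Rightarrow> real) \<Rightarrow> real" where
  "fisher n p A B = expect n p (\<lambda>i. A i * B i) - expect n p A * expect n p B"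

text \<open>Channels W y x = W(y|x) from Omega_m to Omega_n, with the Markov condition.\<close>
definition markov_channel :: "nat \<Rightarrow> nat \<Rightarrow> (nat \<Rightarrow> nat \<Rightarrow> real) \<Rightarrow> bool" where
  "markov_channel m n W \<longleftrightarrow>
     (\<forall>x<m. \<forall>y<n. 0 \<le> W y x) \<and> (\<forall>x<m. (\<Sum>y<n. W y x) = 1) \<and>
     (\<forall>y<n. \<exists>x<m. 0 < W y x)"

text \<open>The Markov map p |-> sum_x W(.|x) p(x). It is (the restriction of) a linear map,
  so the same formula applied to tangent_vec vectors is its differential.\<close>
definition markov_map :: "nat \<Rightarrow> nat \<Rightarrow> (nat \<Rightarrow> nat \<Rightarrow> real) \<Rightarrow> (nat \<Rightarrow> real) \<Rightarrow> (nat \<Rightarrow> real)" where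
  "markov_map m n W p = (\<lambda>y. if y < n then (\<Sum>x<m. W y x * p x) else 0)"

definition cometric :: "nat \<Rightarrow> ((nat \<Rightarrow> real) \<Rightarrow> (nat \<Rightarrow> real) \<Rightarrow> (nat \<Rightarrow> real) \<Rightarrow> real) \<Rightarrow> bool" where
  "cometric n hn \<longleftrightarrow>
     (\<forall>p\<in>prob_simplex n.
        (\<forall>A A' B B'. cov_eq n A A' \<longrightarrow> cov_eq n B B' \<longrightarrow> hn p A B = hn p A' B') \<and>
        (\<forall>a b A A' B. hn p (\<lambda>i. a * A i + b * A' i) B = a * hn p A B + b * hn p A' B) \<and>
        (\<forall>A B. hn p A B = hn p B A) \<and>
        (\<forall>A. (\<forall>B. hn p A B = 0) \<longrightarrow> cov_eq n A (\<lambda>_. 0))) \<and>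
     (\<forall>A B. continuous_on (prob_simplex n) (\<lambda>p. hn p A B))"

end

theory Submission
  imports Defs
begin


lemma dexp_markov: "dexp n B (markov_map m n W v) = dexp m (\<lambda>x. \<Sum>z<n. B z * W z x) v"
  unfolding dexp_def markov_map_def
  by (simp add: sum_distrib_left sum_distrib_right mult.assoc sum.swap[of _ "{..<n}"])

lemma fisher_dexp:
  assumes "(\<Sum>i<n. p i) = 1"
  shows "fisher n p A C = dexp n C (\<lambda>x. if x<n then p x * (A x - expect n p A) else 0)"
  unfolding fisher_def dexp_def expect_def
  by (simp add: algebra_simps sum_subtractf sum_distrib_left sum_distrib_right)

lemma fisher_tangent:
  assumes "(\<Sum>i<n. p i) = 1"
  shows "tangent_vec n (\<lambda>x. if x<n then p x * (A x - expect n p A) else 0)"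
proof -
  have "(\<Sum>x<n. p x * (A x - expect n p A)) = expect n p A - expect n p A * (\<Sum>x<n. p x)"
    unfolding expect_def[of n p A]
    by (simp add: right_diff_distrib sum_subtractf sum_distrib_left[symmetric] sum_distrib_right[symmetric] mult.commute)
  then show ?thesis using assms unfolding tangent_vec_def by simp
qed

lemma fisher_commute: "fisher n p A B = fisher n p B A"
  unfolding fisher_def by (simp add: mult.commute mult.left_commute)



lemma M_ident:
  assumes m1: "1 \<le> m" and comp: "\<forall>p\<in>prob_simplex m. markov_map n m V (markov_map m n W p) = p"
    and x: "x<m" and k: "k<m"
  shows "(\<Sum>z<n. V x z * W z k) = (if x = k then 1 else 0)"
proof -
  define M where "M = (\<lambda>x'. \<Sum>z<n. V x z * W z x')"
  have L: "(\<Sum>x'<m. M x' * p x') = p x" if p: "p \<in> prob_simplex m" for p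
  proof -
    have "markov_map n m V (markov_map m n W p) x = p x" using comp p by simp
    then have "(\<Sum>z<n. V x z * (\<Sum>x'<m. W z x' * p x')) = p x"
      using x unfolding markov_map_def by simp
    then show ?thesis unfolding M_def
      by (simp add: sum_distrib_left sum_distrib_right mult.assoc sum.swap[of _ "{..<n}"])
  qed
  define u where "u = (\<lambda>i. if i<m then 1/real m else (0::real))"
  define pk where "pk = (\<lambda>i. if i<m then (1/real m + (if i=k then 1 else 0))/2 else (0::real))"
  have u: "u \<in> prob_simplex m" using m1 unfolding u_def prob_simplex_def by auto
  have pk: "pk \<in> prob_simplex m" using m1 k unfolding pk_def prob_simplex_def
    by (auto simp: sum.distrib sum_divide_distrib[symmetric] add_pos_nonneg)
  have "(\<Sum>x'<m. M x' * pk x') = (\<Sum>x'<m. M x' * u x' / 2 + M x' * (if x' = k then 1/2 else 0))"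
    by (rule sum.cong) (auto simp: pk_def u_def field_simps)
  also have "\<dots> = (\<Sum>x'<m. M x' * u x') / 2 + M k / 2"
    using k by (simp only: sum.distrib) (simp add: sum_divide_distrib[symmetric] mult.commute[of "M _"] if_distrib sum.delta cong: if_cong)
  finally have "pk x = u x / 2 + M k / 2" using L[OF pk] L[OF u] by simp
  then show ?thesis using x unfolding pk_def u_def M_def by (auto split: if_splits)
qed



lemma bilin:
  fixes K :: "nat \<Rightarrow> nat \<Rightarrow> real"
  assumes Kq: "\<forall>z<n. (\<Sum>x<m. K x z) = q z" and Kp: "\<forall>x<m. (\<Sum>z<n. K x z) = p x"
  shows "(\<Sum>x<m. (\<Sum>z<n. B z * K x z) * (A x - (\<Sum>x<m. p x * A x)))
       = (\<Sum>z<n. (\<Sum>x<m. A x * K x z) * (B z - (\<Sum>z<n. q z * B z)))"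
proof -
  define a where "a = (\<Sum>x<m. p x * A x)"
  define b where "b = (\<Sum>z<n. q z * B z)"
  define S where "S = (\<Sum>x<m. \<Sum>z<n. B z * K x z * A x)"
  have "(\<Sum>x<m. (\<Sum>z<n. B z * K x z) * (A x - a)) = S - (\<Sum>x<m. \<Sum>z<n. B z * K x z) * a"
    unfolding S_def by (simp add: algebra_simps sum_subtractf sum_distrib_right sum_distrib_left)
  also have "(\<Sum>x<m. \<Sum>z<n. B z * K x z) = b"
  proof -
    have "(\<Sum>x<m. \<Sum>z<n. B z * K x z) = (\<Sum>z<n. B z * (\<Sum>x<m. K x z))"
      by (subst sum.swap) (simp add: sum_distrib_left)
    also have "\<dots> = b" unfolding b_def using Kq by (simp add: mult.commute)
    finally show ?thesis .
  qed
  finally have 1: "(\<Sum>x<m. (\<Sum>z<n. B z * K x z) * (A x - a)) = S - b * a" .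
  have "(\<Sum>z<n. (\<Sum>x<m. A x * K x z) * (B z - b)) = S - (\<Sum>z<n. \<Sum>x<m. A x * K x z) * b"
    unfolding S_def by (simp add: algebra_simps sum_subtractf sum_distrib_right sum_distrib_left sum.swap[of _ "{..<m}"])
  also have "(\<Sum>z<n. \<Sum>x<m. A x * K x z) = a"
  proof -
    have "(\<Sum>z<n. \<Sum>x<m. A x * K x z) = (\<Sum>x<m. A x * (\<Sum>z<n. K x z))"
      by (subst sum.swap) (simp add: sum_distrib_left)
    also have "\<dots> = a" unfolding a_def using Kp by (simp add: mult.commute)
    finally show ?thesis .
  qed
  finally have 2: "(\<Sum>z<n. (\<Sum>x<m. A x * K x z) * (B z - b)) = S - a * b" .
  show ?thesis using 1 2 unfolding a_def[symmetric] b_def[symmetric] by simp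
qed



lemma block:
  assumes chW: "markov_channel m n W" and chV: "markov_channel n m V"
    and MI: "\<And>x k. x<m \<Longrightarrow> k<m \<Longrightarrow> (\<Sum>z<n. V x z * W z k) = (if x = k then 1 else 0)"
    and x: "x<m" and z: "z<n"
  shows "\<And>x'. x'<m \<Longrightarrow> x' \<noteq> x \<Longrightarrow> V x z * W z x' = 0"
    and "0 < W z x \<Longrightarrow> V x z = 1"
proof -
  fix x' assume x': "x'<m" "x' \<noteq> x"
  have "(\<Sum>z<n. V x z * W z x') = 0" using MI[OF x x'(1)] x' by simp
  moreover have "\<forall>z\<in>{..<n}. 0 \<le> V x z * W z x'"
    using chW chV x x' unfolding markov_channel_def by auto
  ultimately show "V x z * W z x' = 0" using z sum_nonneg_eq_0_iff[of "{..<n}" "\<lambda>z. V x z * W z x'"]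
    by auto
next
  assume pos: "0 < W z x"
  have Vle: "V x z' \<le> 1" if "z'<n" for z'
  proof -
    have "V x z' \<le> (\<Sum>x''<m. V x'' z')"
      by (rule member_le_sum) (use chV that x in \<open>auto simp: markov_channel_def\<close>)
    then show ?thesis using chV that unfolding markov_channel_def by auto
  qed
  have "(\<Sum>z<n. (1 - V x z) * W z x) = (\<Sum>z<n. W z x) - (\<Sum>z<n. V x z * W z x)"
    by (simp add: algebra_simps sum_subtractf)
  also have "\<dots> = 0" using MI[OF x x] chW x unfolding markov_channel_def by simp
  finally have "(\<Sum>z<n. (1 - V x z) * W z x) = 0" .
  moreover have "\<forall>z\<in>{..<n}. 0 \<le> (1 - V x z) * W z x"
    using chW x Vle unfolding markov_channel_def by auto
  ultimately have "(1 - V x z) * W z x = 0" using z sum_nonneg_eq_0_iff[of "{..<n}" "\<lambda>z. (1 - V x z) * W z x"]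
    by auto
  then show "V x z = 1" using pos by simp
qed

lemma Kident:
  assumes chW: "markov_channel m n W" and chV: "markov_channel n m V"
    and MI: "\<And>x k. x<m \<Longrightarrow> k<m \<Longrightarrow> (\<Sum>z<n. V x z * W z k) = (if x = k then 1 else 0)"
    and x: "x<m" and z: "z<n"
  shows "W z x * p x = V x z * (\<Sum>x'<m. W z x' * p x')"
proof -
  have "V x z * (\<Sum>x'<m. W z x' * p x') = (\<Sum>x'<m. if x' = x then V x z * W z x * p x else 0)"
    unfolding sum_distrib_left
    by (rule sum.cong) (auto simp: block(1)[OF chW chV MI x z] simp flip: mult.assoc)
  also have "\<dots> = V x z * W z x * p x" using x by simp
  finally have e: "V x z * (\<Sum>x'<m. W z x' * p x') = V x z * W z x * p x" .
  show ?thesis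
  proof (cases "0 < W z x")
    case True then show ?thesis using e block(2)[OF chW chV MI x z] by simp
  next
    case False then have "W z x = 0" using chW x z unfolding markov_channel_def by force
    then show ?thesis using e by simp
  qed
qed

lemma image_simplex:
  assumes chW: "markov_channel m n W" and p: "p \<in> prob_simplex m"
  shows "markov_map m n W p \<in> prob_simplex n"
proof -
  have pos: "0 < (\<Sum>x<m. W z x * p x)" if z: "z<n" for z
  proof -
    obtain x where x: "x<m" "0 < W z x" using chW z unfolding markov_channel_def by auto
    have "W z x * p x \<le> (\<Sum>x<m. W z x * p x)"
      by (rule member_le_sum) (use chW p z x in \<open>auto simp: markov_channel_def prob_simplex_def\<close>)
    moreover have "0 < W z x * p x" using x p unfolding prob_simplex_def by auto
    ultimately show ?thesis by linarith
  qed
  have "(\<Sum>z<n. \<Sum>x<m. W z x * p x) = (\<Sum>x<m. p x * (\<Sum>z<n. W z x))"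
    by (subst sum.swap) (simp add: sum_distrib_left mult.commute)
  also have "\<dots> = 1" using chW p unfolding markov_channel_def prob_simplex_def by simp
  finally show ?thesis using pos unfolding prob_simplex_def markov_map_def by auto
qed



lemma dir1:
  assumes c: "\<forall>n\<ge>2. \<forall>p\<in>prob_simplex n. \<forall>A B. h n p A B = c * fisher n p A B"
    and m2: "2 \<le> m" and mn: "m \<le> n" and chW: "markov_channel m n W" and chV: "markov_channel n m V"
    and comp: "\<forall>p\<in>prob_simplex m. markov_map n m V (markov_map m n W p) = p"
    and p: "p \<in> prob_simplex m"
    and hC: "\<forall>v. tangent_vec m v \<longrightarrow> dexp m C v = dexp n B (markov_map m n W v)"
    and hD: "\<forall>u. tangent_vec n u \<longrightarrow> dexp n D u = dexp m A (markov_map n m V u)"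
  shows "h m p A C = h n (markov_map m n W p) D B"
proof -
  define q where "q = markov_map m n W p"
  have q: "q \<in> prob_simplex n" unfolding q_def by (rule image_simplex[OF chW p])
  have ps: "(\<Sum>i<m. p i) = 1" using p unfolding prob_simplex_def by auto
  have qs: "(\<Sum>i<n. q i) = 1" using q unfolding prob_simplex_def by auto
  have MI: "\<And>x k. x<m \<Longrightarrow> k<m \<Longrightarrow> (\<Sum>z<n. V x z * W z k) = (if x = k then 1 else 0)"
    using M_ident[OF _ comp] m2 by auto
  define K where "K = (\<lambda>x z. W z x * p x)"
  have qz: "q z = (\<Sum>x<m. W z x * p x)" if "z<n" for z using that unfolding q_def markov_map_def by simp
  have Kq: "\<forall>z<n. (\<Sum>x<m. K x z) = q z" unfolding K_def using qz by simp
  have Kp: "\<forall>x<m. (\<Sum>z<n. K x z) = p x" unfolding K_def using chW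
    by (simp add: markov_channel_def sum_distrib_right[symmetric])
  have KV: "K x z = V x z * q z" if "x<m" "z<n" for x z
    unfolding K_def qz[OF that(2)] by (rule Kident[OF chW chV MI that])
  define vv where "vv = (\<lambda>x. if x<m then p x * (A x - expect m p A) else 0)"
  define uu where "uu = (\<lambda>x. if x<n then q x * (B x - expect n q B) else 0)"
  have "h m p A C = c * fisher m p A C" using c m2 p by auto
  also have "fisher m p A C = dexp m C vv" unfolding vv_def by (rule fisher_dexp[OF ps])
  also have "\<dots> = dexp n B (markov_map m n W vv)" using hC fisher_tangent[OF ps] unfolding vv_def by blast
  also have "\<dots> = dexp m (\<lambda>x. \<Sum>z<n. B z * W z x) vv" by (rule dexp_markov)
  also have "\<dots> = (\<Sum>x<m. (\<Sum>z<n. B z * K x z) * (A x - (\<Sum>x<m. p x * A x)))"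
    unfolding dexp_def vv_def K_def expect_def
    by (rule sum.cong) (auto simp: sum_distrib_right mult.assoc)
  also have "\<dots> = (\<Sum>z<n. (\<Sum>x<m. A x * K x z) * (B z - (\<Sum>z<n. q z * B z)))"
    by (rule bilin[OF Kq Kp])
  also have "\<dots> = dexp n (\<lambda>z. \<Sum>x<m. A x * V x z) uu"
    unfolding dexp_def uu_def expect_def
    by (rule sum.cong) (auto simp: KV sum_distrib_right mult.assoc)
  also have "\<dots> = dexp m A (markov_map n m V uu)" by (rule dexp_markov[symmetric])
  also have "\<dots> = dexp n D uu" using hD fisher_tangent[OF qs] unfolding uu_def by metis
  also have "\<dots> = fisher n q B D" unfolding uu_def by (rule fisher_dexp[OF qs, symmetric])
  also have "\<dots> = fisher n q D B" by (rule fisher_commute)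
  finally show ?thesis using c m2 mn q unfolding q_def by auto
qed



definition indv :: "nat \<Rightarrow> nat \<Rightarrow> real" where "indv y = (\<lambda>i. if i = y then 1 else 0)"
definition pt :: "real \<Rightarrow> nat \<Rightarrow> real" where
  "pt t = (\<lambda>i. if i = 0 then t else if i = 1 then 1 - t else 0)"

lemma sum_split_at:
  fixes f :: "nat \<Rightarrow> real"
  assumes "y<n"
  shows "(\<Sum>z<n. f z) = f y + (\<Sum>z<n. if z = y then 0 else f z)"
proof -
  have "(\<Sum>z<n. f z) = (\<Sum>z<n. (if z = y then f z else 0) + (if z = y then 0 else f z))"
    by (rule sum.cong) auto
  also have "\<dots> = f y + (\<Sum>z<n. if z = y then 0 else f z)"
    using assms by (simp add: sum.distrib)
  finally show ?thesis .
qed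

lemma lin_sum:
  assumes hc: "cometric n hn" and p: "p \<in> prob_simplex n"
  shows "hn p A B = (\<Sum>y<n. A y * hn p (indv y) B)"
proof -
  have lin: "\<And>a b A A' B. hn p (\<lambda>i. a * A i + b * A' i) B = a * hn p A B + b * hn p A' B"
   and wd: "\<And>A A' B B'. cov_eq n A A' \<Longrightarrow> cov_eq n B B' \<Longrightarrow> hn p A B = hn p A' B'"
    using hc p unfolding cometric_def by auto
  have refl: "cov_eq n B B" for B unfolding cov_eq_def by simp
  have ind: "hn p (\<lambda>i. \<Sum>y\<in>S. A y * indv y i) B = (\<Sum>y\<in>S. A y * hn p (indv y) B)" if "finite S" for S
    using that
  proof (induction S rule: finite_induct)
    case empty
    have "hn p (\<lambda>i. 0 * A i + 0 * A i) B = 0 * hn p A B + 0 * hn p A B" by (rule lin)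
    then show ?case by simp
  next
    case (insert y S)
    have "(\<lambda>i. \<Sum>y\<in>insert y S. A y * indv y i) = (\<lambda>i. A y * indv y i + 1 * (\<Sum>y\<in>S. A y * indv y i))"
      using insert by auto
    then show ?case using insert lin[of "A y" "indv y" 1 "\<lambda>i. \<Sum>y\<in>S. A y * indv y i" B] by simp
  qed
  have "cov_eq n A (\<lambda>i. \<Sum>y<n. A y * indv y i)"
    unfolding cov_eq_def dexp_def
  proof (intro allI impI)
    fix v
    show "(\<Sum>i<n. A i * v i) = (\<Sum>i<n. (\<Sum>y<n. A y * indv y i) * v i)"
      by (rule sum.cong) (auto simp: indv_def if_distrib[of "(*) _"] cong: if_cong)
  qed
  then have "hn p A B = hn p (\<lambda>i. \<Sum>y<n. A y * indv y i) B" using wd refl by blast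
  then show ?thesis using ind[of "{..<n}"] by simp
qed

lemma fisher_ind: assumes "y < n" shows "fisher n q (indv y) B = q y * B y - q y * expect n q B"
proof -
  have 1: "(\<lambda>i. q i * (indv y i * B i)) = (\<lambda>i. if i = y then q y * B y else 0)" by (auto simp: indv_def)
  have 2: "(\<lambda>i. q i * indv y i) = (\<lambda>i. if i = y then q y else 0)" by (auto simp: indv_def)
  show ?thesis unfolding fisher_def expect_def 1 2 using assms by simp
qed

lemma fisher_lin: "fisher n q A B = (\<Sum>y<n. A y * fisher n q (indv y) B)"
proof -
  have "(\<Sum>y<n. A y * fisher n q (indv y) B) = (\<Sum>y<n. q y * (A y * B y) - (q y * A y) * expect n q B)"
    by (rule sum.cong) (auto simp: fisher_ind algebra_simps)
  also have "\<dots> = fisher n q A B"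
    unfolding fisher_def expect_def by (simp add: sum_subtractf sum_distrib_right)
  finally show ?thesis by simp
qed

lemma P2:
  assumes hc: "cometric 2 h2" and p: "p \<in> prob_simplex 2"
  shows "h2 p (indv 0) C = (C 0 - C 1) * h2 p (indv 0) (indv 0)"
proof -
  have lin: "\<And>a b A A' B. h2 p (\<lambda>i. a * A i + b * A' i) B = a * h2 p A B + b * h2 p A' B"
   and wd: "\<And>A A' B B'. cov_eq 2 A A' \<Longrightarrow> cov_eq 2 B B' \<Longrightarrow> h2 p A B = h2 p A' B'"
   and sym: "\<And>A B. h2 p A B = h2 p B A"
    using hc p unfolding cometric_def by auto
  have refl: "cov_eq 2 B B" for B unfolding cov_eq_def by simp
  have ce: "cov_eq 2 C (\<lambda>i. (C 0 - C 1) * indv 0 i + 0 * indv 0 i)"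
    unfolding cov_eq_def dexp_def tangent_vec_def
  proof (intro allI impI)
    fix v :: "nat \<Rightarrow> real" assume "(\<forall>i\<ge>2. v i = 0) \<and> (\<Sum>i<2. v i) = 0"
    then have "v 1 = - v 0" by (simp add: numeral_2_eq_2)
    then show "(\<Sum>i<2. C i * v i) = (\<Sum>i<2. ((C 0 - C 1) * indv 0 i + 0 * indv 0 i) * v i)"
      by (simp add: numeral_2_eq_2 indv_def algebra_simps)
  qed
  have "h2 p (indv 0) C = h2 p C (indv 0)" by (rule sym)
  also have "\<dots> = h2 p (\<lambda>i. (C 0 - C 1) * indv 0 i + 0 * indv 0 i) (indv 0)" using wd ce refl by blast
  also have "\<dots> = (C 0 - C 1) * h2 p (indv 0) (indv 0) + 0 * h2 p (indv 0) (indv 0)" by (rule lin)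
  finally show ?thesis by simp
qed



definition inv_cond :: "(nat \<Rightarrow> (nat \<Rightarrow> real) \<Rightarrow> (nat \<Rightarrow> real) \<Rightarrow> (nat \<Rightarrow> real) \<Rightarrow> real) \<Rightarrow> bool" where
 "inv_cond h \<longleftrightarrow> (\<forall>m n W V. 2 \<le> m \<longrightarrow> m \<le> n \<longrightarrow>
            markov_channel m n W \<longrightarrow> markov_channel n m V \<longrightarrow>
            (\<forall>p\<in>prob_simplex m. markov_map n m V (markov_map m n W p) = p) \<longrightarrow>
            (\<forall>p\<in>prob_simplex m. \<forall>A B C D.
               (\<forall>v. tangent_vec m v \<longrightarrow> dexp m C v = dexp n B (markov_map m n W v)) \<longrightarrow>
               (\<forall>u. tangent_vec n u \<longrightarrow> dexp n D u = dexp m A (markov_map n m V u)) \<longrightarrow>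
               h m p A C = h n (markov_map m n W p) D B))"

lemma q_bounds:
  assumes n2: "2 \<le> n" and q: "q \<in> prob_simplex n" and y: "y<n"
  shows "0 < q y" "q y < 1" "(\<Sum>z<n. if z = y then 0 else q z) = 1 - q y"
proof -
  show "0 < q y" using q y unfolding prob_simplex_def by auto
  have s: "(\<Sum>z<n. q z) = q y + (\<Sum>z<n. if z = y then 0 else q z)" by (rule sum_split_at[OF y])
  then show "(\<Sum>z<n. if z = y then 0 else q z) = 1 - q y" using q unfolding prob_simplex_def by auto
  define y' where "y' = (if y = 0 then 1 else 0::nat)"
  have y': "y' < n" "y' \<noteq> y" using n2 unfolding y'_def by auto
  have "(if y' = y then 0 else q y') \<le> (\<Sum>z<n. if z = y then 0 else q z)"
    by (rule member_le_sum) (use q y' in \<open>auto simp: prob_simplex_def\<close>)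
  moreover have "0 < q y'" using q y' unfolding prob_simplex_def by auto
  ultimately show "q y < 1" using s q y' unfolding prob_simplex_def by auto
qed

lemma key_formula:
  assumes R: "inv_cond h" and c2: "cometric 2 (h 2)" and n2: "2 \<le> n"
    and q: "q \<in> prob_simplex n" and y: "y < n"
  shows "h n q (indv y) B = h 2 (pt (q y)) (indv 0) (indv 0) / (q y * (1 - q y)) * fisher n q (indv y) B"
proof -
  define t where "t = q y"
  have t0: "0 < t" and t1: "t < 1" and rest: "(\<Sum>z<n. if z = y then 0 else q z) = 1 - t"
    using q_bounds[OF n2 q y] unfolding t_def by auto
  define W :: "nat \<Rightarrow> nat \<Rightarrow> real" where "W = (\<lambda>z x. if x = 0 then (if z = y then 1 else 0)
      else if x = 1 then (if z = y then 0 else q z / (1 - t)) else 0)"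
  define V :: "nat \<Rightarrow> nat \<Rightarrow> real" where "V = (\<lambda>x z. if x = 0 then (if z = y then 1 else 0)
      else if x = 1 then (if z = y then 0 else 1) else 0)"
  have qpos: "\<And>z. z<n \<Longrightarrow> 0 < q z" using q unfolding prob_simplex_def by auto
  have chW: "markov_channel 2 n W"
    unfolding markov_channel_def
  proof (intro conjI allI impI)
    fix x z assume "x < (2::nat)" "z < n"
    then show "0 \<le> W z x" unfolding W_def using qpos t1 by (auto intro: less_imp_le)
  next
    fix x assume x: "x < (2::nat)"
    show "(\<Sum>z<n. W z x) = 1"
    proof (cases "x = 0")
      case True then show ?thesis unfolding W_def using y by simp
    next
      case False then have "x = 1" using x by simp
      then have "(\<Sum>z<n. W z x) = (\<Sum>z<n. (if z = y then 0 else q z) / (1 - t))"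
        unfolding W_def by (intro sum.cong) auto
      also have "\<dots> = 1" using rest t1 by (simp add: sum_divide_distrib[symmetric])
      finally show ?thesis .
    qed
  next
    fix z assume z: "z < n"
    show "\<exists>x<2. 0 < W z x"
    proof (cases "z = y")
      case True then show ?thesis by (intro exI[of _ 0]) (simp add: W_def)
    next
      case False then show ?thesis using qpos[OF z] t1 by (intro exI[of _ 1]) (simp add: W_def)
    qed
  qed
  have chV: "markov_channel n 2 V"
    unfolding markov_channel_def
  proof (intro conjI allI impI)
    fix x z assume "x < n" "z < (2::nat)"
    then show "0 \<le> V z x" unfolding V_def by auto
  next
    fix z assume "z < n"
    then show "(\<Sum>x<2. V x z) = 1" unfolding V_def by (simp add: numeral_2_eq_2)
  next
    fix x assume x: "x < (2::nat)"
    define y' where "y' = (if y = 0 then 1 else 0::nat)"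
    have y': "y' < n" "y' \<noteq> y" using n2 unfolding y'_def by auto
    show "\<exists>z<n. 0 < V x z"
    proof (cases "x = 0")
      case True then show ?thesis using y by (intro exI[of _ y]) (simp add: V_def)
    next
      case False then have "x = 1" using x by simp
      then show ?thesis using y' by (intro exI[of _ y']) (simp add: V_def)
    qed
  qed
  have Wp: "markov_map 2 n W p z = (if z < n then (if z = y then p 0 else q z / (1 - t) * p 1) else 0)" for p z
    unfolding markov_map_def W_def by (simp add: numeral_2_eq_2)
  have comp: "\<forall>p\<in>prob_simplex 2. markov_map n 2 V (markov_map 2 n W p) = p"
  proof
    fix p :: "nat \<Rightarrow> real" assume p: "p \<in> prob_simplex 2"
    show "markov_map n 2 V (markov_map 2 n W p) = p"
    proof
      fix i
      show "markov_map n 2 V (markov_map 2 n W p) i = p i"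
      proof (cases "i < 2")
        case False then show ?thesis using p unfolding markov_map_def prob_simplex_def by auto
      next
        case True
        then consider "i = 0" | "i = 1" by linarith
        then show ?thesis
        proof cases
          case 1
          have "(\<Sum>z<n. V i z * markov_map 2 n W p z) = (\<Sum>z<n. if z = y then p 0 else 0)"
            unfolding Wp V_def 1 by (intro sum.cong) auto
          then show ?thesis using y 1 unfolding markov_map_def by simp
        next
          case 2
          have "(\<Sum>z<n. V i z * markov_map 2 n W p z) = (\<Sum>z<n. (if z = y then 0 else q z) * (p 1 / (1 - t)))"
            unfolding Wp V_def 2 by (intro sum.cong) auto
          also have "\<dots> = (1 - t) * (p 1 / (1 - t))" by (simp only: sum_distrib_right[symmetric] rest)
          also have "\<dots> = p 1" using t1 by simp
          finally show ?thesis using 2 unfolding markov_map_def by simp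
        qed
      qed
    qed
  qed
  have ptS: "pt t \<in> prob_simplex 2" using t0 t1 unfolding pt_def prob_simplex_def by (auto simp: numeral_2_eq_2)
  have ptq: "markov_map 2 n W (pt t) = q"
  proof
    fix z show "markov_map 2 n W (pt t) z = q z"
      unfolding Wp using q t1 unfolding pt_def t_def prob_simplex_def by auto
  qed
  define C where "C = (\<lambda>x. \<Sum>z<n. B z * W z x)"
  define D where "D = (\<lambda>z. \<Sum>x<2. indv 0 x * V x z)"
  have D: "D = indv y" unfolding D_def indv_def V_def by (auto simp: numeral_2_eq_2)
  have main: "h 2 (pt t) (indv 0) C = h n (markov_map 2 n W (pt t)) D B"
    using R n2 chW chV comp ptS unfolding inv_cond_def C_def D_def
    by (auto simp: dexp_markov)
  have C0: "C 0 = B y" unfolding C_def W_def using y by (simp add: if_distrib[of "(*) _"] cong: if_cong)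
  define Rr where "Rr = (\<Sum>z<n. if z = y then 0 else q z * B z)"
  have C1: "C 1 = Rr / (1 - t)" unfolding C_def W_def Rr_def
    unfolding sum_divide_distrib by (rule sum.cong) (simp_all add: W_def)
  have E: "expect n q B = t * B y + Rr" unfolding expect_def Rr_def t_def
    by (rule sum_split_at[OF y])
  have "h n q (indv y) B = (C 0 - C 1) * h 2 (pt t) (indv 0) (indv 0)"
    using main ptq D P2[OF c2 ptS, of C] by simp
  also have "\<dots> = h 2 (pt t) (indv 0) (indv 0) / (t * (1 - t)) * fisher n q (indv y) B"
    unfolding fisher_ind[OF y] C0 C1 E t_def[symmetric] using t0 t1
    by (simp add: field_simps)
  finally show ?thesis unfolding t_def .
qed



lemma dir2:
  assumes hc: "\<And>n. 2 \<le> n \<Longrightarrow> cometric n (h n)" and R: "inv_cond h"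
  shows "\<exists>c. c \<noteq> 0 \<and> (\<forall>n\<ge>2. \<forall>p\<in>prob_simplex n. \<forall>A B. h n p A B = c * fisher n p A B)"
proof -
  define g where "g t = h 2 (pt t) (indv 0) (indv 0) / (t * (1 - t))" for t
  have c2: "cometric 2 (h 2)" using hc by simp
  have KF: "h n q (indv y) B = g (q y) * fisher n q (indv y) B"
    if "2 \<le> n" "q \<in> prob_simplex n" "y < n" for n q y B
    unfolding g_def by (rule key_formula[OF R c2 that])
  have gsym: "g s = g t" if s: "0 < s" and t: "0 < t" and st: "s + t < 1" for s t
  proof -
    define q where "q = (\<lambda>i::nat. if i = 0 then s else if i = 1 then t else if i = 2 then 1 - s - t else 0)"
    have q: "q \<in> prob_simplex 3" using s t st unfolding q_def prob_simplex_def
      by (auto simp: numeral_3_eq_3)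
    have e1: "expect 3 q (indv 1) = t" unfolding expect_def q_def indv_def by (simp add: numeral_3_eq_3)
    have e0: "expect 3 q (indv 0) = s" unfolding expect_def q_def indv_def by (simp add: numeral_3_eq_3)
    have f1: "fisher 3 q (indv 0) (indv 1) = - (s * t)"
      using fisher_ind[of 0 3 q "indv 1"] e1 by (simp add: q_def indv_def)
    have f2: "fisher 3 q (indv 1) (indv 0) = - (s * t)"
      using fisher_ind[of 1 3 q "indv 0"] e0 by (simp add: q_def indv_def)
    have "h 3 q (indv 0) (indv 1) = h 3 q (indv 1) (indv 0)"
      using hc[of 3] q unfolding cometric_def by auto
    then have "g s * (- (s * t)) = g t * (- (s * t))"
      using KF[of 3 q 0 "indv 1"] KF[of 3 q 1 "indv 0"] q f1 f2 by (simp add: q_def)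
    then show ?thesis using s t by simp
  qed
  define c where "c = g (1/2)"
  have gc: "g t = c" if "0 < t" "t < 1" for t
  proof -
    define r where "r = min (1 - t) (1/2) / 2"
    have "g t = g r" using that by (intro gsym) (auto simp: r_def min_def field_simps)
    also have "\<dots> = g (1/2)" using that by (intro gsym) (auto simp: r_def min_def field_simps)
    finally show ?thesis unfolding c_def .
  qed
  have all: "\<forall>n\<ge>2. \<forall>p\<in>prob_simplex n. \<forall>A B. h n p A B = c * fisher n p A B"
  proof (intro allI impI ballI)
    fix n p A B assume n: "2 \<le> n" and p: "p \<in> prob_simplex n"
    have "h n p A B = (\<Sum>y<n. A y * h n p (indv y) B)" by (rule lin_sum[OF hc[OF n] p])
    also have "\<dots> = (\<Sum>y<n. c * (A y * fisher n p (indv y) B))"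
    proof (rule sum.cong)
      fix y assume "y \<in> {..<n}"
      then have y: "y < n" by simp
      show "A y * h n p (indv y) B = c * (A y * fisher n p (indv y) B)"
        using KF[OF n p y] gc q_bounds(1,2)[OF n p y] by simp
    qed simp
    also have "\<dots> = c * fisher n p A B" by (simp add: fisher_lin[of n p A B] sum_distrib_left)
    finally show "h n p A B = c * fisher n p A B" .
  qed
  have "c \<noteq> 0"
  proof
    assume c0: "c = 0"
    define p where "p = pt (1/2)"
    have p: "p \<in> prob_simplex 2" unfolding p_def pt_def prob_simplex_def by (auto simp: numeral_2_eq_2)
    have "\<forall>B. h 2 p (indv 0) B = 0" using all p c0 by auto
    then have "cov_eq 2 (indv 0) (\<lambda>_. 0)" using c2 p unfolding cometric_def by blast
    moreover define v where "v = (\<lambda>i::nat. if i = 0 then 1 else if i = 1 then -1 else (0::real))"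
    moreover have "tangent_vec 2 v" unfolding tangent_vec_def v_def by (simp add: numeral_2_eq_2)
    ultimately have "dexp 2 (indv 0) v = dexp 2 (\<lambda>_. 0) v" unfolding cov_eq_def by blast
    then show False unfolding dexp_def v_def indv_def by (simp add: numeral_2_eq_2)
  qed
  then show ?thesis using all by blast
qed


theorem mainTheorem13:
  fixes h :: "nat \<Rightarrow> (nat \<Rightarrow> real) \<Rightarrow> (nat \<Rightarrow> real) \<Rightarrow> (nat \<Rightarrow> real) \<Rightarrow> real"
  assumes h_cometric: "\<And>n. 2 \<le> n \<Longrightarrow> cometric n (h n)"
  shows "(\<exists>c. c \<noteq> 0 \<and>
            (\<forall>n\<ge>2. \<forall>p\<in>prob_simplex n. \<forall>A B. h n p A B = c * fisher n p A B))
     \<longleftrightarrow>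
         (\<forall>m n W V. 2 \<le> m \<longrightarrow> m \<le> n \<longrightarrow>
            markov_channel m n W \<longrightarrow> markov_channel n m V \<longrightarrow>
            (\<forall>p\<in>prob_simplex m. markov_map n m V (markov_map m n W p) = p) \<longrightarrow>
            (\<forall>p\<in>prob_simplex m. \<forall>A B C D.
               (\<forall>v. tangent_vec m v \<longrightarrow> dexp m C v = dexp n B (markov_map m n W v)) \<longrightarrow>
               (\<forall>u. tangent_vec n u \<longrightarrow> dexp n D u = dexp m A (markov_map n m V u)) \<longrightarrow>
               h m p A C = h n (markov_map m n W p) D B))"
proof
  assume "\<exists>c. c \<noteq> 0 \<and>
            (\<forall>n\<ge>2. \<forall>p\<in>prob_simplex n. \<forall>A B. h n p A B = c * fisher n p A B)"
  then obtain c where c: "\<forall>n\<ge>2. \<forall>p\<in>prob_simplex n. \<forall>A B. h n p A B = c * fisher n p A B"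
    by blast
  show "\<forall>m n W V. 2 \<le> m \<longrightarrow> m \<le> n \<longrightarrow>
            markov_channel m n W \<longrightarrow> markov_channel n m V \<longrightarrow>
            (\<forall>p\<in>prob_simplex m. markov_map n m V (markov_map m n W p) = p) \<longrightarrow>
            (\<forall>p\<in>prob_simplex m. \<forall>A B C D.
               (\<forall>v. tangent_vec m v \<longrightarrow> dexp m C v = dexp n B (markov_map m n W v)) \<longrightarrow>
               (\<forall>u. tangent_vec n u \<longrightarrow> dexp n D u = dexp m A (markov_map n m V u)) \<longrightarrow>
               h m p A C = h n (markov_map m n W p) D B)"
  proof (intro allI impI ballI)
    fix m n W V p A B C D
    assume "2 \<le> m" "m \<le> n" "markov_channel m n W" "markov_channel n m V"
      "\<forall>p\<in>prob_simplex m. markov_map n m V (markov_map m n W p) = p" "p \<in> prob_simplex m"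
      "\<forall>v. tangent_vec m v \<longrightarrow> dexp m C v = dexp n B (markov_map m n W v)"
      "\<forall>u. tangent_vec n u \<longrightarrow> dexp n D u = dexp m A (markov_map n m V u)"
    then show "h m p A C = h n (markov_map m n W p) D B" by (rule dir1[OF c])
  qed
next
  assume R: "\<forall>m n W V. 2 \<le> m \<longrightarrow> m \<le> n \<longrightarrow>
            markov_channel m n W \<longrightarrow> markov_channel n m V \<longrightarrow>
            (\<forall>p\<in>prob_simplex m. markov_map n m V (markov_map m n W p) = p) \<longrightarrow>
            (\<forall>p\<in>prob_simplex m. \<forall>A B C D.
               (\<forall>v. tangent_vec m v \<longrightarrow> dexp m C v = dexp n B (markov_map m n W v)) \<longrightarrow>
               (\<forall>u. tangent_vec n u \<longrightarrow> dexp n D u = dexp m A (markov_map n m V u)) \<longrightarrow>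
               h m p A C = h n (markov_map m n W p) D B)"
  have ic: "inv_cond h" unfolding inv_cond_def using R by blast
  show "\<exists>c. c \<noteq> 0 \<and>
            (\<forall>n\<ge>2. \<forall>p\<in>prob_simplex n. \<forall>A B. h n p A B = c * fisher n p A B)"
    using dir2[of h, OF h_cometric ic] by blast
qed

end
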